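(* Let $H_5$ be the tournament with vertex set $\{1,2,3,4,5\}$ whose edges are $1\to4$ and $2\to5$, and $j\to i$ for every other pair $i<j$ (i.e., $2\to1$, $3\to1$, $5\to1$, $3\to2$, $4\to2$, $4\to3$, $5\to3$, $5\to4$). Then $H_5$ is not quasirandom-forcing.
   Context: A tournament is an orientation of a complete graph; $\mathrm{Aut}(H)$ is its automorphism group. For tournaments $H,G$, $d(H,G)$ is the probability that $\lvert H\rvert$ uniformly random distinct vertices of $G$ induce a tournament isomorphic to $H$ (and $0$ if $\lvert H\rvert>\lvert G\rvert$). A sequence $(G_n)$ of tournaments with $\lvert G_n\rvert\to\infty$ is quasirandom if $\lim_{n\to\infty} d(F,G_n)=\frac{m!}{\lvert\mathrm{Aut}(F)\rvert}2^{-\binom{m}{2}}$ for every tournament $F$ with $m$ vertices. A $k$-vertex tournament $H$ is quasirandom-forcing if every sequence $(G_n)$ of tournaments with $\lvert G_n\rvert\to\infty$ and $\lim_{n\to\infty} d(H,G_n)=\frac{k!}{\lvert\mathrm{Aut}(H)\rvert}2^{-\binom{k}{2}}$ is quasirandom. *)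

theory Defs
  imports "HOL-Analysis.Analysis"
begin

text \<open>A tournament on n vertices is represented with vertex set {0..<n} and an edge
relation E, where E i j means i \<rightarrow> j.\<close>

type_synonym tournament = "nat \<times> (nat \<Rightarrow> nat \<Rightarrow> bool)"

definition is_tournament :: "tournament \<Rightarrow> bool" where
  "is_tournament T \<longleftrightarrow>
     (\<forall>i j. snd T i j \<longrightarrow> i < fst T \<and> j < fst T \<and> i \<noteq> j) \<and>
     (\<forall>i j. i < fst T \<longrightarrow> j < fst T \<longrightarrow> i \<noteq> j \<longrightarrow> (snd T i j \<longleftrightarrow> \<not> snd T j i))"

definition iso_to_induced :: "tournament \<Rightarrow> tournament \<Rightarrow> nat set \<Rightarrow> bool" where
  "iso_to_induced H G S \<longleftrightarrow>
     (\<exists>f. bij_betw f {0..<fst H} S \<and>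
          (\<forall>i<fst H. \<forall>j<fst H. snd H i j \<longleftrightarrow> snd G (f i) (f j)))"

definition density :: "tournament \<Rightarrow> tournament \<Rightarrow> real" where
  "density H G =
     (if fst H > fst G then 0
      else real (card {S. S \<subseteq> {0..<fst G} \<and> card S = fst H \<and> iso_to_induced H G S})
           / real (fst G choose fst H))"

definition aut :: "tournament \<Rightarrow> (nat \<Rightarrow> nat) set" where
  "aut H = {f \<in> {0..<fst H} \<rightarrow>\<^sub>E {0..<fst H}. bij_betw f {0..<fst H} {0..<fst H} \<and>
              (\<forall>i<fst H. \<forall>j<fst H. snd H i j \<longleftrightarrow> snd H (f i) (f j))}"

definition random_density :: "tournament \<Rightarrow> real" where
  "random_density F = fact (fst F) / real (card (aut F)) * (1/2) ^ (fst F choose 2)"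

definition quasirandom :: "(nat \<Rightarrow> tournament) \<Rightarrow> bool" where
  "quasirandom G \<longleftrightarrow>
     (\<forall>F. is_tournament F \<longrightarrow> (\<lambda>n. density F (G n)) \<longlonglongrightarrow> random_density F)"

definition quasirandom_forcing :: "tournament \<Rightarrow> bool" where
  "quasirandom_forcing H \<longleftrightarrow>
     (\<forall>G. (\<forall>n. is_tournament (G n)) \<longrightarrow> filterlim (\<lambda>n. fst (G n)) at_top sequentially \<longrightarrow>
          (\<lambda>n. density H (G n)) \<longlonglongrightarrow> random_density H \<longrightarrow> quasirandom G)"

text \<open>H_5 with vertices shifted by one: paper vertex v is vertex v-1 here.
Edges 1\<rightarrow>4 and 2\<rightarrow>5 (here 0\<rightarrow>3, 1\<rightarrow>4); otherwise j\<rightarrow>i for i<j.\<close>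
definition H5 :: tournament where
  "H5 = (5, \<lambda>i j. i < 5 \<and> j < 5 \<and> i \<noteq> j \<and>
            (if {i, j} = {0, 3} \<or> {i, j} = {1, 4} then i < j else j < i))"

end

theory Submission
  imports Defs
begin


definition P7 :: "nat \<Rightarrow> nat \<Rightarrow> bool" where
  "P7 a b \<longleftrightarrow> (b + 7 - a) mod 7 \<in> {1,2,4}"

lemma lt7: "(a::nat) < 7 \<longleftrightarrow> a = 0 \<or> a = 1 \<or> a = 2 \<or> a = 3 \<or> a = 4 \<or> a = 5 \<or> a = 6"
  by auto

lemma P7_anti: "a < 7 \<Longrightarrow> b < 7 \<Longrightarrow> a \<noteq> b \<Longrightarrow> P7 a b \<longleftrightarrow> \<not> P7 b a"
  unfolding lt7 by (elim disjE) (auto simp: P7_def)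

lemma P7_012: "P7 a b \<longleftrightarrow> a < b" if "a \<le> 2" "b \<le> 2" "a \<noteq> b"
proof -
  have e: "(x::nat) \<le> 2 \<longleftrightarrow> x = 0 \<or> x = 1 \<or> x = 2" for x by auto
  show ?thesis using that unfolding e by (elim disjE) (auto simp: P7_def)
qed

lemma lt5: "(a::nat) < 5 \<longleftrightarrow> a = 0 \<or> a = 1 \<or> a = 2 \<or> a = 3 \<or> a = 4"
  by auto

lemma H5_tour: "is_tournament H5"
proof -
  have 1: "\<forall>i j. snd H5 i j \<longrightarrow> i < fst H5 \<and> j < fst H5 \<and> i \<noteq> j"
    by (simp add: H5_def)
  have "snd H5 i j = (\<not> snd H5 j i)" if "i < 5" "j < 5" "i \<noteq> j" for i j
    using that unfolding lt5 by (elim disjE) (simp_all add: H5_def doubleton_eq_iff)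
  moreover have "fst H5 = 5" by (simp add: H5_def)
  ultimately have 2: "\<forall>i j. i < fst H5 \<longrightarrow> j < fst H5 \<longrightarrow> i \<noteq> j \<longrightarrow> (snd H5 i j \<longleftrightarrow> \<not> snd H5 j i)"
    by metis
  show ?thesis unfolding is_tournament_def using 1 2 by blast
qed

definition hi :: "nat \<Rightarrow> nat \<Rightarrow> nat \<Rightarrow> bool" where
  "hi m u v \<longleftrightarrow> (if u div m = v div m then u < v else P7 (u div m) (v div m))"

definition Gs :: "nat \<Rightarrow> nat \<Rightarrow> tournament" where
  "Gs m s = (7*m, \<lambda>u v. u < 7*m \<and> v < 7*m \<and> u \<noteq> v \<and>
      (if min u v * (7*m) + max u v < s then hi m u v else u < v))"

lemma fst_Gs[simp]: "fst (Gs m s) = 7*m" by (simp add: Gs_def)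

lemma hi_anti:
  assumes "m > 0" "u < 7*m" "v < 7*m" "u \<noteq> v"
  shows "hi m u v \<longleftrightarrow> \<not> hi m v u"
proof -
  have "u div m < 7" "v div m < 7" using assms by (simp_all add: div_less_iff_less_mult)
  then show ?thesis using assms P7_anti[of "u div m" "v div m"] by (auto simp: hi_def)
qed

lemma Gs_tour: assumes m: "m > 0" shows "is_tournament (Gs m s)"
proof -
  have 1: "\<forall>u v. snd (Gs m s) u v \<longrightarrow> u < fst (Gs m s) \<and> v < fst (Gs m s) \<and> u \<noteq> v"
    by (simp add: Gs_def)
  have "snd (Gs m s) u v = (\<not> snd (Gs m s) v u)" if uv: "u < 7*m" "v < 7*m" "u \<noteq> v" for u v
  proof -
    have k: "min v u * (7*m) + max v u = min u v * (7*m) + max u v"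
      by (simp add: min.commute max.commute)
    show ?thesis
    proof (cases "min u v * (7*m) + max u v < s")
      case True
      then show ?thesis using hi_anti[OF m uv] uv k by (simp add: Gs_def)
    next
      case False
      then show ?thesis using uv k by (auto simp: Gs_def)
    qed
  qed
  moreover have "fst (Gs m s) = 7*m" by simp
  ultimately have 2: "\<forall>u v. u < fst (Gs m s) \<longrightarrow> v < fst (Gs m s) \<longrightarrow> u \<noteq> v \<longrightarrow> (snd (Gs m s) u v \<longleftrightarrow> \<not> snd (Gs m s) v u)"
    by metis
  show ?thesis unfolding is_tournament_def using 1 2 by blast
qed

lemma Gs_low:
  assumes "m > 0" "u < 3*m" "v < 3*m"
  shows "snd (Gs m s) u v \<longleftrightarrow> u < v"
proof -
  have b: "u div m \<le> 2" "v div m \<le> 2" using assms by (simp_all add: less_Suc_eq_le[symmetric] div_less_iff_less_mult)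
  have "hi m u v \<longleftrightarrow> u < v"
  proof (cases "u div m = v div m")
    case True then show ?thesis by (simp add: hi_def)
  next
    case False
    have "u div m < v div m \<longleftrightarrow> u < v"
    proof
      assume a: "u div m < v div m"
      show "u < v"
      proof (rule ccontr)
        assume "\<not> u < v"
        then have "v div m \<le> u div m" by (intro div_le_mono) simp
        then show False using a by simp
      qed
    next
      assume "u < v"
      then have "u div m \<le> v div m" by (intro div_le_mono) simp
      then show "u div m < v div m" using False by simp
    qed
    then show ?thesis using False b P7_012 by (simp add: hi_def)
  qed
  then show ?thesis using assms by (auto simp: Gs_def)
qed

lemma iso_cong:
  assumes "\<forall>u\<in>S. \<forall>v\<in>S. snd G u v = snd G' u v"
  shows "iso_to_induced H G S = iso_to_induced H G' S"
  unfolding iso_to_induced_def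
proof (intro iffI; elim exE conjE)
  fix f assume f: "bij_betw f {0..<fst H} S" "\<forall>i<fst H. \<forall>j<fst H. snd H i j = snd G (f i) (f j)"
  have "f i \<in> S" if "i < fst H" for i using f(1) that by (auto dest: bij_betwE)
  then show "\<exists>f. bij_betw f {0..<fst H} S \<and> (\<forall>i<fst H. \<forall>j<fst H. snd H i j = snd G' (f i) (f j))"
    using f assms by metis
next
  fix f assume f: "bij_betw f {0..<fst H} S" "\<forall>i<fst H. \<forall>j<fst H. snd H i j = snd G' (f i) (f j)"
  have "f i \<in> S" if "i < fst H" for i using f(1) that by (auto dest: bij_betwE)
  then show "\<exists>f. bij_betw f {0..<fst H} S \<and> (\<forall>i<fst H. \<forall>j<fst H. snd H i j = snd G (f i) (f j))"
    using f assms by metis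
qed

lemma Gs_step:
  assumes "snd (Gs m (Suc s)) u v \<noteq> snd (Gs m s) u v"
  shows "u \<noteq> v \<and> {u, v} = {s div (7*m), s mod (7*m)}"
proof -
  let ?N = "7*m"
  have uv: "u < ?N" "v < ?N" "u \<noteq> v" and k: "min u v * ?N + max u v = s"
    using assms by (auto simp: Gs_def split: if_splits)
  have mx: "max u v < ?N" using uv by simp
  have "s div ?N = min u v" "s mod ?N = max u v" using k mx by (auto simp flip: k)
  then show ?thesis using uv by (auto simp: min_def max_def)
qed

lemma card_B:
  assumes "N \<ge> 2"
  shows "card {S. S \<subseteq> {0..<N} \<and> card S = 5 \<and> a \<in> S \<and> b \<in> S \<and> a \<noteq> b} \<le> (N - 2) choose 3"
    (is "card ?B \<le> _")
proof (cases "a < N \<and> b < N \<and> a \<noteq> b")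
  case False
  then have "?B = {}" by (auto simp: subset_iff)
  then show ?thesis by (metis card.empty zero_le)
next
  case True
  let ?T = "{T. T \<subseteq> {0..<N} - {a, b} \<and> card T = 3}"
  have "inj_on (\<lambda>S. S - {a, b}) ?B"
  proof (rule inj_onI)
    fix S S' assume "S \<in> ?B" "S' \<in> ?B" "S - {a, b} = S' - {a, b}"
    then show "S = S'" by blast
  qed
  moreover have "(\<lambda>S. S - {a, b}) ` ?B \<subseteq> ?T"
  proof
    fix X assume "X \<in> (\<lambda>S. S - {a, b}) ` ?B"
    then obtain S where S: "S \<in> ?B" "X = S - {a, b}" by blast
    have "finite S" using S(1) finite_subset by fastforce
    then have "card (S - {a, b}) = card S - card {a, b}"
      using S(1) by (intro card_Diff_subset) auto
    then show "X \<in> ?T" using S by auto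
  qed
  moreover have "finite ?T" by simp
  ultimately have "card ?B \<le> card ?T" by (intro card_inj_on_le)
  also have "card ?T = card ({0..<N} - {a, b}) choose 3" by (rule n_subsets) simp
  also have "card ({0..<N} - {a, b}) = N - 2" using True by (simp add: card_Diff_subset)
  finally show ?thesis .
qed

lemma choose_ratio: "N \<ge> 5 \<Longrightarrow> real ((N - 2) choose 3) / real (N choose 5) = 10 / real (N choose 2)"
proof -
  assume N: "N \<ge> 5"
  have "(N choose 5) * (5 choose 2) = (N choose 2) * ((N - 2) choose (5 - 2))"
    by (rule choose_mult) (use N in auto)
  moreover have c52: "(5::nat) choose 2 = 10" by (simp add: choose_two)
  moreover have d52: "(5::nat) - 2 = 3" by simp
  ultimately have e0: "(N choose 5) * 10 = (N choose 2) * ((N - 2) choose 3)"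
    by (simp only:)
  have "real ((N choose 5) * 10) = real ((N choose 2) * ((N - 2) choose 3))"
    using e0 by (rule arg_cong)
  then have e: "real (N choose 5) * 10 = real (N choose 2) * real ((N - 2) choose 3)"
    by (simp only: of_nat_mult of_nat_numeral)
  have p1: "real (N choose 5) > 0" "real (N choose 2) > 0" using N by auto
  show ?thesis using e p1 by (simp add: field_simps)
qed

lemma step_bound:
  assumes m: "m > 0"
  shows "\<bar>density H5 (Gs m (Suc s)) - density H5 (Gs m s)\<bar> \<le> 10 / real ((7*m) choose 2)"
proof -
  let ?N = "7*m"
  let ?a = "s div ?N" and ?b = "s mod ?N"
  define X where "X t = {S. S \<subseteq> {0..<?N} \<and> card S = 5 \<and> iso_to_induced H5 (Gs m t) S}" for t
  define B where "B = {S. S \<subseteq> {0..<?N} \<and> card S = 5 \<and> ?a \<in> S \<and> ?b \<in> S \<and> ?a \<noteq> ?b}"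
  have N5: "?N \<ge> 5" using m by simp
  have fH: "fst H5 = 5" by (simp add: H5_def)
  have same: "iso_to_induced H5 (Gs m (Suc s)) S = iso_to_induced H5 (Gs m s) S"
    if "S \<notin> B" "S \<subseteq> {0..<?N}" "card S = 5" for S
  proof (rule iso_cong, intro ballI)
    fix u v assume uv: "u \<in> S" "v \<in> S"
    show "snd (Gs m (Suc s)) u v = snd (Gs m s) u v"
    proof (rule ccontr)
      assume "snd (Gs m (Suc s)) u v \<noteq> snd (Gs m s) u v"
      from Gs_step[OF this] have "u \<noteq> v" "{u, v} = {?a, ?b}" by auto
      then have "S \<in> B" using that uv unfolding B_def by (auto simp: doubleton_eq_iff)
      then show False using that by simp
    qed
  qed
  have fin: "finite (X t)" for t
    by (rule finite_subset[of _ "Pow {0..<?N}"]) (auto simp: X_def)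
  have finB: "finite B"
    by (rule finite_subset[of _ "Pow {0..<?N}"]) (auto simp: B_def)
  have s1: "X (Suc s) \<subseteq> X s \<union> B" using same unfolding X_def by blast
  have s2: "X s \<subseteq> X (Suc s) \<union> B" using same unfolding X_def by blast
  have c1: "card (X (Suc s)) \<le> card (X s) + card B"
    using card_mono[OF _ s1] card_Un_le[of "X s" B] fin finB by (meson finite_UnI le_trans)
  have c2: "card (X s) \<le> card (X (Suc s)) + card B"
    using card_mono[OF _ s2] card_Un_le[of "X (Suc s)" B] fin finB by (meson finite_UnI le_trans)
  have cB: "card B \<le> (?N - 2) choose 3" unfolding B_def by (rule card_B) (use m in simp)
  have d: "density H5 (Gs m t) = real (card (X t)) / real (?N choose 5)" for t
    using N5 by (simp add: density_def fH X_def)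
  have pos: "real (?N choose 5) > 0" using N5 by simp
  have "\<bar>real (card (X (Suc s))) - real (card (X s))\<bar> \<le> real ((?N - 2) choose 3)"
    using c1 c2 cB by linarith
  then have "\<bar>real (card (X (Suc s))) - real (card (X s))\<bar> / real (?N choose 5) \<le> real ((?N - 2) choose 3) / real (?N choose 5)"
    using pos by (intro divide_right_mono) auto
  moreover have "density H5 (Gs m (Suc s)) - density H5 (Gs m s) = (real (card (X (Suc s))) - real (card (X s))) / real (?N choose 5)"
    unfolding d by (rule diff_divide_distrib[symmetric])
  moreover have "\<bar>(real (card (X (Suc s))) - real (card (X s))) / real (?N choose 5)\<bar> = \<bar>real (card (X (Suc s))) - real (card (X s))\<bar> / real (?N choose 5)"
    using pos by (simp add: abs_divide)
  ultimately have "\<bar>density H5 (Gs m (Suc s)) - density H5 (Gs m s)\<bar> \<le> real ((?N - 2) choose 3) / real (?N choose 5)"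
    by simp
  also have "\<dots> = 10 / real (?N choose 2)" using choose_ratio[OF N5] .
  finally show ?thesis .
qed



definition T :: "nat list list" where
  "T = [[4, 3, 2, 1, 0], [2, 0, 5, 3, 1], [3, 2, 1, 0, 6], [2, 5, 1, 4, 0], [1, 6, 4, 2, 0], [2, 1, 0, 6, 5], [5, 1, 4, 0, 3], [1, 4, 0, 3, 6], [0, 5, 3, 1, 6], [1, 0, 6, 5, 4], [4, 2, 0, 5, 3], [4, 0, 3, 6, 2], [0, 3, 6, 2, 5], [6, 4, 2, 0, 5], [0, 6, 5, 4, 3], [5, 4, 3, 2, 1], [3, 1, 6, 4, 2], [3, 6, 2, 5, 1], [6, 2, 5, 1, 4], [5, 3, 1, 6, 4], [6, 5, 4, 3, 2]]"

lemma T_len: "length T = 21" by (simp add: T_def)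

lemma T_chk1: "list_all (\<lambda>l. length l = 5 \<and> distinct l \<and> list_all (\<lambda>x. x < 7) l) T"
  by code_simp

lemma T_chk2: "list_all (\<lambda>l. list_all (\<lambda>i. list_all (\<lambda>j. snd H5 i j = (i \<noteq> j \<and> P7 (l!i) (l!j))) [0..<5]) [0..<5]) T"
  by code_simp

lemma T_chk3: "distinct (map sort T)"
  by code_simp

lemma T_props:
  assumes "k < 21"
  shows "length (T!k) = 5" "distinct (T!k)" "\<And>i. i < 5 \<Longrightarrow> T!k!i < 7"
proof -
  have "length (T!k) = 5 \<and> distinct (T!k) \<and> list_all (\<lambda>x. x < 7) (T!k)"
    using T_chk1 assms T_len by (simp add: list_all_length)
  then show "length (T!k) = 5" "distinct (T!k)" "\<And>i. i < 5 \<Longrightarrow> T!k!i < 7"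
    by (auto simp: list_all_length)
qed

lemma T_edges:
  assumes "k < 21" "i < 5" "j < 5"
  shows "snd H5 i j = (i \<noteq> j \<and> P7 (T!k!i) (T!k!j))"
proof -
  have "list_all (\<lambda>i. list_all (\<lambda>j. snd H5 i j = (i \<noteq> j \<and> P7 (T!k!i) (T!k!j))) [0..<5]) [0..<5]"
    using T_chk2 assms(1) T_len by (simp add: list_all_length)
  then show ?thesis using assms(2,3) by (simp add: list_all_iff)
qed

lemma T_inj:
  assumes "k < 21" "k' < 21" "set (T!k) = set (T!k')"
  shows "k = k'"
proof -
  have "sort (T!k) = sorted_list_of_set (set (T!k))" if "k < 21" for k
    using T_props(2)[OF that] by (simp add: sorted_list_of_set_sort_remdups distinct_remdups_id)
  then have "map sort T ! k = map sort T ! k'" using assms T_len by simp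
  then show ?thesis using T_chk3 assms T_len by (metis length_map nth_eq_iff_index_eq)
qed

lemma key_lt: "u < N \<Longrightarrow> v < N \<Longrightarrow> min u v * N + max u v < N * (N::nat)"
proof -
  assume uv: "u < N" "v < N"
  have "(min u v + 1) * N \<le> N * N" using uv by (intro mult_le_mono1) simp
  then show ?thesis using uv by (simp add: algebra_simps)
qed

lemma fdiv: "b < (m::nat) \<Longrightarrow> (a * m + b) div m = a"
  by simp

lemma fmod: "b < (m::nat) \<Longrightarrow> (a * m + b) mod m = b"
  by simp

lemma hi_count:
  assumes m: "m > 0"
  shows "21 * m ^ 5 \<le> card {S. S \<subseteq> {0..<7*m} \<and> card S = 5 \<and> iso_to_induced H5 (Gs m (7*m*(7*m))) S}"
    (is "_ \<le> card ?X")
proof -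
  let ?N = "7*m"
  let ?G = "Gs m (7*m*(7*m))"
  define D where "D = {0..<(21::nat)} \<times> ({0..<(5::nat)} \<rightarrow>\<^sub>E {..<m})"
  define \<Phi> where "\<Phi> = (\<lambda>(k, g). (\<lambda>i. T!k!i * m + g i) ` {0..<(5::nat)})"
  have cD: "card D = 21 * m ^ 5"
    by (simp add: D_def card_cartesian_product card_PiE)
  have blk: "(\<lambda>v. v div m) ` \<Phi> (k, g) = set (T!k)" if "(k, g) \<in> D" for k g
  proof -
    have k: "k < 21" and g: "\<And>i. i < 5 \<Longrightarrow> g i < m" using that by (auto simp: D_def)
    have "(\<lambda>v. v div m) ` \<Phi> (k, g) = (\<lambda>i. T!k!i) ` {0..<5}"
      unfolding \<Phi>_def by (auto simp: image_image fdiv[OF g] intro!: image_cong)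
    also have "\<dots> = set (T!k)" using T_props(1)[OF k] by (auto simp: set_conv_nth)
    finally show ?thesis .
  qed
  have inj: "inj_on \<Phi> D"
  proof (rule inj_onI)
    fix x y assume x: "x \<in> D" and y: "y \<in> D" and e: "\<Phi> x = \<Phi> y"
    obtain k g where xkg: "x = (k, g)" by (cases x)
    obtain k' g' where ykg: "y = (k', g')" by (cases y)
    have k: "k < 21" "k' < 21" and g: "g \<in> {0..<5} \<rightarrow>\<^sub>E {..<m}" "g' \<in> {0..<5} \<rightarrow>\<^sub>E {..<m}"
      using x y xkg ykg by (auto simp: D_def)
    have "set (T!k) = set (T!k')" using blk x y xkg ykg e by metis
    then have kk: "k = k'" using T_inj k by blast
    have "g i = g' i" if i: "i \<in> {0..<5}" for i
    proof -
      have "T!k!i * m + g i \<in> \<Phi> y" using e xkg i unfolding \<Phi>_def by auto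
      then obtain j where j: "j < 5" "T!k!i * m + g i = T!k!j * m + g' j"
        using ykg kk unfolding \<Phi>_def by auto
      have gi: "g i < m" "g' j < m" using g i j by auto
      have "T!k!i = T!k!j" using arg_cong[OF j(2), of "\<lambda>v. v div m"] gi by (simp only: fdiv)
      then have "i = j" using T_props(1,2)[OF k(1)] i j(1) by (simp add: nth_eq_iff_index_eq)
      then show ?thesis using j(2) by simp
    qed
    then have "g = g'" using g by (intro PiE_ext) auto
    then show "x = y" using xkg ykg kk by simp
  qed
  have sub: "\<Phi> ` D \<subseteq> ?X"
  proof
    fix S assume "S \<in> \<Phi> ` D"
    then obtain k g where kg: "(k, g) \<in> D" and S: "S = \<Phi> (k, g)" by auto
    have k: "k < 21" and g: "\<And>i. i < 5 \<Longrightarrow> g i < m" using kg by (auto simp: D_def)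
    define f where "f i = T!k!i * m + g i" for i
    have Sf: "S = f ` {0..<5}" using S unfolding \<Phi>_def f_def by simp
    have fdv: "f i div m = T!k!i" if "i < 5" for i unfolding f_def using fdiv[OF g[OF that]] .
    have flt: "f i < ?N" if i: "i < 5" for i
    proof -
      have "T!k!i + 1 \<le> 7" using T_props(3)[OF k i] by simp
      then have "(T!k!i + 1) * m \<le> 7 * m" by (rule mult_le_mono1)
      moreover have "(T!k!i + 1) * m = T!k!i * m + m" by simp
      ultimately show ?thesis using g[OF i] unfolding f_def by linarith
    qed
    have feq: "f i = f j \<longleftrightarrow> i = j" if "i < 5" "j < 5" for i j
    proof
      assume "f i = f j"
      then have "T!k!i = T!k!j" using fdv that by metis
      then show "i = j" using T_props(1,2)[OF k] that by (simp add: nth_eq_iff_index_eq)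
    qed simp
    have injf: "inj_on f {0..<5}" using feq by (auto intro: inj_onI)
    have "S \<subseteq> {0..<?N}" using flt Sf by auto
    moreover have "card S = 5" using Sf injf by (simp add: card_image)
    moreover have "iso_to_induced H5 ?G S"
      unfolding iso_to_induced_def
    proof (intro exI conjI allI impI)
      show "bij_betw f {0..<fst H5} S" using injf Sf by (simp add: H5_def inj_on_imp_bij_betw)
    next
      fix i j assume "i < fst H5" "j < fst H5"
      then have ij: "i < 5" "j < 5" by (simp_all add: H5_def)
      have kl: "min (f i) (f j) * ?N + max (f i) (f j) < 7*m*(7*m)"
        using key_lt[OF flt[OF ij(1)] flt[OF ij(2)]] by simp
      have "snd ?G (f i) (f j) = (i \<noteq> j \<and> hi m (f i) (f j))"
        using kl flt[OF ij(1)] flt[OF ij(2)] feq[OF ij] by (simp add: Gs_def)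
      also have "\<dots> = (i \<noteq> j \<and> P7 (T!k!i) (T!k!j))"
        using fdv[OF ij(1)] fdv[OF ij(2)] T_props(1,2)[OF k] ij
        by (auto simp: hi_def nth_eq_iff_index_eq)
      also have "\<dots> = snd H5 i j" using T_edges[OF k ij] by simp
      finally show "snd H5 i j = snd ?G (f i) (f j)" by simp
    qed
    ultimately show "S \<in> ?X" by simp
  qed
  have fin: "finite ?X" by (rule finite_subset[of _ "Pow {0..<?N}"]) auto
  have "card D \<le> card ?X" using card_inj_on_le[OF inj sub fin] .
  then show ?thesis using cD by simp
qed



lemma choose5_le: "real (N choose 5) \<le> real N ^ 5 / 120"
proof -
  have "(N choose 5) * fact 5 \<le> N ^ 5" by (rule binomial_fact_pow)
  moreover have "(fact 5 :: nat) = 120" by (simp add: fact_numeral)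
  ultimately have "real (N choose 5) * 120 \<le> real N ^ 5"
    by (metis of_nat_le_iff of_nat_mult of_nat_numeral of_nat_power)
  then show ?thesis by simp
qed

lemma hi_density:
  assumes m: "m > 0"
  shows "density H5 (Gs m (7*m*(7*m))) \<ge> 2520 / 16807"
proof -
  let ?X = "{S. S \<subseteq> {0..<7*m} \<and> card S = 5 \<and> iso_to_induced H5 (Gs m (7*m*(7*m))) S}"
  have fH: "fst H5 = 5" by (simp add: H5_def)
  have d: "density H5 (Gs m (7*m*(7*m))) = real (card ?X) / real ((7*m) choose 5)"
    using m by (simp add: density_def fH)
  have c: "real (21 * m ^ 5) \<le> real (card ?X)" using hi_count[OF m] by (simp only: of_nat_le_iff)
  have pos: "real ((7*m) choose 5) > 0" using m by simp
  have b: "real ((7*m) choose 5) \<le> real (7*m) ^ 5 / 120" by (rule choose5_le)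
  have mp: "real m > 0" using m by simp
  have "2520 / 16807 = real (21 * m ^ 5) / (real (7*m) ^ 5 / 120)"
    using mp by (simp add: field_simps)
  also have "\<dots> \<le> real (21 * m ^ 5) / real ((7*m) choose 5)"
    using pos b by (intro divide_left_mono) auto
  also have "\<dots> \<le> real (card ?X) / real ((7*m) choose 5)"
    using c pos by (intro divide_right_mono) auto
  finally show ?thesis using d by simp
qed

lemma lo_density:
  assumes m: "m > 0"
  shows "density H5 (Gs m 0) = 0"
proof -
  have fH: "fst H5 = 5" by (simp add: H5_def)
  have "\<not> iso_to_induced H5 (Gs m 0) S" for S
  proof
    assume "iso_to_induced H5 (Gs m 0) S"
    then obtain f where f: "\<forall>i<5. \<forall>j<5. snd H5 i j = snd (Gs m 0) (f i) (f j)"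
      unfolding iso_to_induced_def fH by blast
    have e: "snd (Gs m 0) u v \<Longrightarrow> u < v" for u v by (simp add: Gs_def)
    have h: "snd H5 0 3" "snd H5 3 1" "snd H5 1 0" by (simp_all add: H5_def doubleton_eq_iff)
    have "f 0 < f 3" by (rule e) (use f[rule_format, of 0 3] h in simp)
    moreover have "f 3 < f 1" by (rule e) (use f[rule_format, of 3 1] h in simp)
    moreover have "f 1 < f 0" by (rule e) (use f[rule_format, of 1 0] h in simp)
    ultimately show False by simp
  qed
  then show ?thesis by (simp add: density_def)
qed

definition TT8 :: tournament where "TT8 = (8, \<lambda>i j. i < 8 \<and> j < 8 \<and> i < j)"

lemma TT8_tour: "is_tournament TT8"
  unfolding is_tournament_def TT8_def by auto

lemma TT8_rd: "random_density TT8 \<le> fact 8 * (1/2) ^ 28"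
proof -
  have e: "(8::nat) choose 2 = 28" by (simp add: choose_two)
  have "fact 8 / real (card (aut TT8)) \<le> fact 8"
  proof (cases "card (aut TT8) = 0")
    case True then show ?thesis by simp
  next
    case False then have "real (card (aut TT8)) \<ge> 1" by simp
    then show ?thesis by (simp add: divide_le_eq)
  qed
  moreover have f8: "fst TT8 = 8" by (simp add: TT8_def)
  ultimately show ?thesis unfolding random_density_def f8 e
    by (intro mult_right_mono) auto
qed

lemma ratio8:
  assumes m: "m \<ge> 21"
  shows "real ((3*m) choose 8) / real ((7*m) choose 8) \<ge> (2/5) ^ 8"
proof -
  have a: "real ((3*m) choose 8) = (\<Prod>i = 0..<8. real (3*m - i) / real (8 - i))"
    using m by (intro binomial_altdef_of_nat) simp
  have b: "real ((7*m) choose 8) = (\<Prod>i = 0..<8. real (7*m - i) / real (8 - i))"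
    using m by (intro binomial_altdef_of_nat) simp
  have "real ((3*m) choose 8) / real ((7*m) choose 8) = (\<Prod>i = 0..<8. (real (3*m - i) / real (8 - i)) / (real (7*m - i) / real (8 - i)))"
    unfolding a b by (rule prod_dividef[symmetric])
  also have "\<dots> = (\<Prod>i = 0..<8. real (3*m - i) / real (7*m - i))"
    by (intro prod.cong) auto
  also have "\<dots> \<ge> (\<Prod>i = 0..<(8::nat). 2/5)"
  proof (intro prod_mono conjI)
    fix i assume i: "i \<in> {0..<(8::nat)}"
    have r1: "real (3*m - i) = 3 * real m - real i" using i m by (simp add: of_nat_diff)
    have r2: "real (7*m - i) = 7 * real m - real i" using i m by (simp add: of_nat_diff)
    have "real i \<le> 7" "real m \<ge> 21" using i m by auto
    then show "2/5 \<le> real (3*m - i) / real (7*m - i)" unfolding r1 r2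
      by (simp add: divide_simps)
  qed auto
  finally show ?thesis by simp
qed



lemma TT8_density:
  assumes m: "m \<ge> 21"
  shows "density TT8 (Gs m s) \<ge> (2/5) ^ 8"
proof -
  have m0: "m > 0" using m by simp
  have f8: "fst TT8 = 8" by (simp add: TT8_def)
  let ?X = "{S. S \<subseteq> {0..<7*m} \<and> card S = 8 \<and> iso_to_induced TT8 (Gs m s) S}"
  let ?Y = "{S. S \<subseteq> {0..<3*m} \<and> card S = 8}"
  have YX: "?Y \<subseteq> ?X"
  proof
    fix S assume S: "S \<in> ?Y"
    then have fin: "finite S" using finite_subset by blast
    define xs where "xs = sorted_list_of_set S"
    have len: "length xs = 8" using S by (simp add: xs_def)
    have dis: "distinct xs" by (simp add: xs_def)
    have sxs: "set xs = S" using fin by (simp add: xs_def)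
    have srt: "sorted_wrt (<) xs" by (simp add: xs_def)
    have mono: "xs ! i < xs ! j \<longleftrightarrow> i < j" if "i < 8" "j < 8" for i j
    proof
      assume "i < j" then show "xs ! i < xs ! j" using sorted_wrt_nth_less[OF srt] that len by simp
    next
      assume a: "xs ! i < xs ! j"
      show "i < j"
      proof (rule ccontr)
        assume "\<not> i < j"
        then have "j < i \<or> j = i" by auto
        then show False
        proof
          assume "j < i" then have "xs ! j < xs ! i" using sorted_wrt_nth_less[OF srt] that len by simp
          then show False using a by simp
        qed (use a in simp)
      qed
    qed
    have inS: "xs ! i \<in> S" if "i < 8" for i using that len sxs nth_mem by fastforce
    have "iso_to_induced TT8 (Gs m s) S"
      unfolding iso_to_induced_def f8
    proof (intro exI conjI allI impI)
      show "bij_betw ((!) xs) {0..<8} S"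
        by (rule bij_betw_nth) (use dis len sxs in auto)
    next
      fix i j :: nat assume ij: "i < 8" "j < 8"
      have "xs ! i \<in> {0..<3*m}" "xs ! j \<in> {0..<3*m}" using inS[OF ij(1)] inS[OF ij(2)] S by blast+
      then have "xs ! i < 3*m" "xs ! j < 3*m" by auto
      then have "snd (Gs m s) (xs ! i) (xs ! j) = (xs ! i < xs ! j)" using Gs_low m0 by blast
      also have "\<dots> = (i < j)" using mono ij by simp
      finally show "snd TT8 i j = snd (Gs m s) (xs ! i) (xs ! j)" using ij by (simp add: TT8_def)
    qed
    then show "S \<in> ?X" using S by auto
  qed
  have fin: "finite ?X" by (rule finite_subset[of _ "Pow {0..<7*m}"]) auto
  have cY: "card ?Y = (3*m) choose 8" using n_subsets[of "{0..<3*m}" 8] by simp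
  have c: "(3*m) choose 8 \<le> card ?X" using card_mono[OF fin YX] cY by simp
  have d: "density TT8 (Gs m s) = real (card ?X) / real ((7*m) choose 8)"
    using m by (simp add: density_def f8)
  have pos: "real ((7*m) choose 8) > 0" using m by simp
  have "(2/5)^8 \<le> real ((3*m) choose 8) / real ((7*m) choose 8)" by (rule ratio8[OF m])
  also have "\<dots> \<le> real (card ?X) / real ((7*m) choose 8)"
    using c pos by (intro divide_right_mono) auto
  finally show ?thesis using d by simp
qed

lemma ivt:
  fixes f :: "nat \<Rightarrow> real"
  assumes "0 \<le> d" "f 0 \<le> t" "t \<le> f L" "\<forall>s<L. \<bar>f (Suc s) - f s\<bar> \<le> d"
  shows "\<exists>s. \<bar>f s - t\<bar> \<le> d"
  using assms(3,4)
proof (induction L)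
  case 0
  then show ?case using assms(1,2) by (intro exI[of _ 0]) auto
next
  case (Suc L)
  show ?case
  proof (cases "t \<le> f L")
    case True
    then show ?thesis using Suc by auto
  next
    case False
    then have "\<bar>f (Suc L) - t\<bar> \<le> d" using Suc.prems by force
    then show ?thesis by blast
  qed
qed

lemma choose2_ge: "N \<ge> 3 \<Longrightarrow> N \<le> N choose 2"
proof -
  assume N: "N \<ge> 3"
  have "2 * N \<le> N * (N - 1)" using N by (simp add: mult_le_mono)
  then have "(2 * N) div 2 \<le> N * (N - 1) div 2" by (rule div_le_mono)
  then show ?thesis by (simp add: choose_two)
qed



theorem mainTheorem6:
  shows "is_tournament H5 \<and> \<not> quasirandom_forcing H5"
proof -
  let ?t = "random_density H5"
  have fH: "fst H5 = 5" by (simp add: H5_def)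
  have e10: "(5::nat) choose 2 = 10" by (simp add: choose_two)
  have t0: "0 \<le> ?t" unfolding random_density_def by simp
  have "fact 5 / real (card (aut H5)) \<le> fact 5"
  proof (cases "card (aut H5) = 0")
    case True then show ?thesis by simp
  next
    case False then have "real (card (aut H5)) \<ge> 1" by simp
    then show ?thesis by (simp add: divide_le_eq)
  qed
  then have "?t \<le> fact 5 * (1/2) ^ 10" unfolding random_density_def fH e10
    by (intro mult_right_mono) auto
  moreover have "(1/2::real) ^ 10 = 1 / 1024" by (simp add: power_divide)
  ultimately have t1: "?t \<le> 120 / 1024" by (simp add: fact_numeral)
  define mm where "mm n = n + 21" for n :: nat
  have ex: "\<exists>s. \<bar>density H5 (Gs (mm n) s) - ?t\<bar> \<le> 10 / real ((7 * mm n) choose 2)" for n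
  proof -
    have m0: "mm n > 0" by (simp add: mm_def)
    show ?thesis
    proof (rule ivt[where L = "7 * mm n * (7 * mm n)"])
      show "0 \<le> 10 / real ((7 * mm n) choose 2)" by simp
      show "density H5 (Gs (mm n) 0) \<le> ?t" using lo_density[OF m0] t0 by simp
      show "?t \<le> density H5 (Gs (mm n) (7 * mm n * (7 * mm n)))"
        using hi_density[OF m0] t1 by simp
      show "\<forall>s<7 * mm n * (7 * mm n). \<bar>density H5 (Gs (mm n) (Suc s)) - density H5 (Gs (mm n) s)\<bar>
          \<le> 10 / real ((7 * mm n) choose 2)"
        using step_bound[OF m0] by blast
    qed
  qed
  then obtain sel where sel: "\<And>n. \<bar>density H5 (Gs (mm n) (sel n)) - ?t\<bar> \<le> 10 / real ((7 * mm n) choose 2)"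
    by metis
  define G where "G n = Gs (mm n) (sel n)" for n
  have tour: "\<forall>n. is_tournament (G n)" unfolding G_def using Gs_tour by (simp add: mm_def)
  have lim: "filterlim (\<lambda>n. fst (G n)) at_top sequentially"
    by (rule filterlim_at_top_mono[OF filterlim_ident]) (simp add: G_def mm_def)
  have bnd: "\<bar>density H5 (G n) - ?t\<bar> \<le> 10 * inverse (real (Suc n))" for n
  proof -
    have "Suc n \<le> 7 * mm n" by (simp add: mm_def)
    also have "\<dots> \<le> (7 * mm n) choose 2" by (rule choose2_ge) (simp add: mm_def)
    finally have "real (Suc n) \<le> real ((7 * mm n) choose 2)" by (simp only: of_nat_le_iff)
    moreover have "real (Suc n) > 0" by simp
    ultimately have pos: "0 < real ((7 * mm n) choose 2) * real (Suc n)"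
      by (intro mult_pos_pos) linarith+
    have "10 / real ((7 * mm n) choose 2) \<le> 10 / real (Suc n)"
      by (rule divide_left_mono) (use pos \<open>real (Suc n) \<le> _\<close> in auto)
    then show ?thesis using sel[of n] unfolding G_def by (simp add: divide_inverse)
  qed
  have "(\<lambda>n. density H5 (G n) - ?t) \<longlonglongrightarrow> 0"
  proof (rule Lim_null_comparison)
    show "\<forall>\<^sub>F n in sequentially. norm (density H5 (G n) - ?t) \<le> 10 * inverse (real (Suc n))"
      using bnd by simp
    show "(\<lambda>n. 10 * inverse (real (Suc n))) \<longlonglongrightarrow> 0"
      using tendsto_mult[OF tendsto_const LIMSEQ_inverse_real_of_nat, of 10] by simp
  qed
  then have conv: "(\<lambda>n. density H5 (G n)) \<longlonglongrightarrow> ?t" by (simp only: LIM_zero_iff)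
  have nqr: "\<not> quasirandom G"
  proof
    assume "quasirandom G"
    then have "(\<lambda>n. density TT8 (G n)) \<longlonglongrightarrow> random_density TT8"
      using TT8_tour unfolding quasirandom_def by blast
    moreover have "\<forall>n. (2/5)^8 \<le> density TT8 (G n)"
      unfolding G_def using TT8_density by (simp add: mm_def)
    ultimately have "(2/5)^8 \<le> random_density TT8" by (intro LIMSEQ_le_const) auto
    with TT8_rd have "(2/5::real)^8 \<le> fact 8 * (1/2) ^ 28" by linarith
    then show False by (simp add: fact_numeral power_divide)
  qed
  show ?thesis using H5_tour tour lim conv nqr unfolding quasirandom_forcing_def by blast
qed


end
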